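(* Let $n=2^m$ for a positive integer $m$. Let $C_0\subseteq F^n$ be a binary code of length $n$, size $2^{n-1}/n$ and minimum distance $4$ all of whose words have even weight, and let $C_1\subseteq F^n$ be a binary code of length $n$, size $2^{n-1}/n$ and minimum distance $4$ all of whose words have odd weight. Then there exists a set $C\subseteq X^n$ with $|C| = 2^{n-1}/n$, in which any two distinct words are at Hamming distance at least $3$, such that $e(C)=C_0$ and $o(C)=C_1$.
   Context: $F^n$ is the set of binary words of length $n$; $X^n$ is the set of words of length $n$ over $\{*,0,1\}$ with exactly one $*$ (equivalently, ternary words of length $n$ and weight $n-1$). The Hamming distance between words of $X^n\cup F^n$ is the number of coordinates in which they differ. A word $\mathbf{x}\in X^n$ is identified with the pair of binary words obtained by replacing $*$ by $0$ and by $1$ (e.g. $01{*}0=\{0100,0110\}$); one of them has even weight, denoted $e(\mathbf{x})$, and the other odd weight, denoted $o(\mathbf{x})$. For $C\subseteq X^n$, $e(C)=\{e(\mathbf{c}):\mathbf{c}\in C\}$ and $o(C)=\{o(\mathbf{c}):\mathbf{c}\in C\}$. *)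

theory Defs
  imports Main
begin

text \<open>Binary words of length n: bool lists (True = 1). Words of X^n: lists over
  bool option, where None is the symbol * and Some b is the bit b.\<close>

definition F :: "nat \<Rightarrow> bool list set" where
  "F n = {w. length w = n}"

definition X :: "nat \<Rightarrow> bool option list set" where
  "X n = {x. length x = n \<and> card {i. i < n \<and> x ! i = None} = 1}"

definition hdist :: "'a list \<Rightarrow> 'a list \<Rightarrow> nat" where
  "hdist u v = card {i. i < length u \<and> u ! i \<noteq> v ! i}"

definition weight :: "bool list \<Rightarrow> nat" where
  "weight w = card {i. i < length w \<and> w ! i}"

definition min_dist :: "'a list set \<Rightarrow> nat \<Rightarrow> bool" where
  "min_dist C d \<longleftrightarrow> (\<forall>u\<in>C. \<forall>v\<in>C. u \<noteq> v \<longrightarrow> d \<le> hdist u v)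
                   \<and> (\<exists>u\<in>C. \<exists>v\<in>C. u \<noteq> v \<and> hdist u v = d)"

definition fill :: "bool option list \<Rightarrow> bool \<Rightarrow> bool list" where
  "fill x b = map (\<lambda>c. case c of None \<Rightarrow> b | Some a \<Rightarrow> a) x"

definition e_word :: "bool option list \<Rightarrow> bool list" where
  "e_word x = (if even (weight (fill x False)) then fill x False else fill x True)"

definition o_word :: "bool option list \<Rightarrow> bool list" where
  "o_word x = (if odd (weight (fill x False)) then fill x False else fill x True)"

end

theory Submission
  imports Defs
begin

definition flip :: "bool list \<Rightarrow> nat \<Rightarrow> bool list" where
  "flip c i = c[i := \<not> c ! i]"

lemma weight_filter: "weight w = length (filter id w)"
  unfolding weight_def by (simp add: length_filter_conv_card)

lemma weight_Cons: "weight (b # w) = (if b then Suc (weight w) else weight w)"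
  by (simp add: weight_filter)

lemma weight_app: "weight (a @ b) = weight a + weight b"
  by (simp add: weight_filter)

lemma weight_Cons': "weight (b # w) = (if b then 1 else 0) + weight w"
  by (simp add: weight_Cons)

lemma all_lists_card: "card {w :: bool list. length w = k} = 2 ^ k"
  using card_lists_length_eq[of "UNIV :: bool set" k] by simp

lemma all_lists_finite: "finite {w :: bool list. length w = k}"
  using finite_lists_length_eq[of "UNIV :: bool set" k] by simp

lemma par_split: "{w. length w = Suc k \<and> P (weight w)} =
   Cons True ` {w. length w = k \<and> P (Suc (weight w))} \<union> Cons False ` {w. length w = k \<and> P (weight w)}"
  apply (rule set_eqI)
  subgoal for w by (cases w) (auto simp: weight_Cons)
  done

lemma par_card: "card {w. length w = Suc k \<and> odd (weight w) = q} = 2 ^ k"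
proof -
  have fin: "finite {w :: bool list. length w = k \<and> Q w}" for Q
    by (rule finite_subset[OF _ all_lists_finite[of k]]) auto
  have "card {w. length w = Suc k \<and> odd (weight w) = q} =
     card {w. length w = k \<and> (odd (Suc (weight w)) = q)} + card {w. length w = k \<and> odd (weight w) = q}"
    unfolding par_split[of k "\<lambda>x. odd x = q"]
    by (subst card_Un_disjoint) (auto simp: fin card_image)
  also have "\<dots> = card ({w. length w = k \<and> (odd (Suc (weight w)) = q)} \<union> {w. length w = k \<and> odd (weight w) = q})"
    by (subst card_Un_disjoint) (auto simp: fin)
  also have "({w. length w = k \<and> (odd (Suc (weight w)) = q)} \<union> {w. length w = k \<and> odd (weight w) = q})
     = {w. length w = k}" by auto
  finally show ?thesis by (simp add: all_lists_card)
qed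

lemma weight_upd: assumes "i < length w"
  shows "weight (w[i := b]) + (if w ! i then 1 else 0) = weight w + (if b then 1 else 0)"
proof -
  have "w = take i w @ w ! i # drop (Suc i) w" using assms by (simp add: id_take_nth_drop)
  then have a: "weight w = weight (take i w) + (if w!i then 1 else 0) + weight (drop (Suc i) w)"
    by (metis weight_app weight_Cons' add.assoc)
  have "w[i:=b] = take i w @ b # drop (Suc i) w" using assms by (simp add: upd_conv_take_nth_drop)
  then have "weight (w[i:=b]) = weight (take i w) + (if b then 1 else 0) + weight (drop (Suc i) w)"
    by (metis weight_app weight_Cons' add.assoc)
  with a show ?thesis by simp
qed

lemma flip_par: "i < length c \<Longrightarrow> odd (weight (flip c i)) = even (weight c)"
  using weight_upd[of i c "\<not> c ! i"] unfolding flip_def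
  by (cases "c ! i"; simp; presburger)

lemma flip_len[simp]: "length (flip c i) = length c"
  by (simp add: flip_def)

lemma flip_inj: "i < length c \<Longrightarrow> j < length c \<Longrightarrow> flip c i = flip c j \<Longrightarrow> i = j"
  unfolding flip_def by (metis nth_list_update_eq nth_list_update_neq)

lemma hdist_le2:
  assumes "\<And>k. k < length u \<Longrightarrow> k \<noteq> i \<Longrightarrow> k \<noteq> j \<Longrightarrow> u ! k = v ! k"
  shows "hdist u v \<le> 2"
proof -
  have sub: "{k. k < length u \<and> u ! k \<noteq> v ! k} \<subseteq> {i, j}" using assms by auto
  have "card {k. k < length u \<and> u ! k \<noteq> v ! k} \<le> card {i, j}" using card_mono[OF _ sub] by simp
  also have "\<dots> \<le> 2" by (simp add: card_insert_if)
  finally show ?thesis by (simp add: hdist_def)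
qed

lemma flip_flip_le2: "length c = length c' \<Longrightarrow> flip c i = flip c' j \<Longrightarrow> hdist c c' \<le> 2"
  apply (rule hdist_le2[of _ i j])
  unfolding flip_def by (metis nth_list_update_neq)

lemma flip_same_le2: "hdist (flip c i) (flip c j) \<le> 2"
  by (rule hdist_le2[of _ i j]) (simp add: flip_def)

lemma cover:
  assumes C: "C \<subseteq> F n" and par: "\<forall>c\<in>C. odd (weight c) = q"
    and dist: "\<forall>u\<in>C. \<forall>v\<in>C. u \<noteq> v \<longrightarrow> 3 \<le> hdist u v"
    and cn: "card C * n = 2 ^ (n - 1)" and n: "0 < n"
    and w: "length w = n" "odd (weight w) \<noteq> q"
  shows "\<exists>c\<in>C. \<exists>i<n. w = flip c i"
proof -
  let ?f = "\<lambda>(c,i). flip c i"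
  let ?N = "?f ` (C \<times> {..<n})"
  let ?S = "{w. length w = Suc (n-1) \<and> odd (weight w) = (\<not>q)}"
  have lenC: "\<And>c. c \<in> C \<Longrightarrow> length c = n" using C by (auto simp: F_def)
  have finC: "finite C" using finite_subset[OF C[unfolded F_def] all_lists_finite] .
  have inj: "inj_on ?f (C \<times> {..<n})"
  proof (rule inj_onI)
    fix a b assume a: "a \<in> C \<times> {..<n}" and b: "b \<in> C \<times> {..<n}" and e: "?f a = ?f b"
    obtain c i where ai: "a = (c,i)" by force
    obtain c' j where bj: "b = (c',j)" by force
    have cc: "c = c'"
    proof (rule ccontr)
      assume "c \<noteq> c'"
      then have "3 \<le> hdist c c'" using dist a b ai bj by auto
      moreover have "hdist c c' \<le> 2" using flip_flip_le2[of c c' i j] e ai bj a b lenC by auto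
      ultimately show False by simp
    qed
    then have "i = j" using flip_inj[of i c j] e ai bj a b lenC by auto
    then show "a = b" using cc ai bj by simp
  qed
  have cardN: "card ?N = card C * n" using card_image[OF inj] by (simp add: card_cartesian_product)
  have fp: "\<forall>c\<in>C. \<forall>i<n. odd (weight (flip c i)) = (\<not>q)"
  proof (intro ballI allI impI)
    fix c i assume "c \<in> C" "i < n"
    then show "odd (weight (flip c i)) = (\<not>q)" using flip_par[of i c] lenC par by auto
  qed
  have sub: "?N \<subseteq> ?S" using n lenC fp by auto
  have finS: "finite ?S" by (rule finite_subset[OF _ all_lists_finite[of "Suc (n-1)"]]) auto
  have "card ?S = 2 ^ (n-1)" using par_card[of "n-1" "\<not>q"] by simp
  then have "?N = ?S" using card_subset_eq[OF finS sub] cardN cn by simp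
  moreover have "w \<in> ?S" using w n by auto
  ultimately have "w \<in> ?N" by simp
  then obtain p where "p \<in> C \<times> {..<n}" "w = ?f p" by blast
  then show ?thesis by (cases p) (simp, blast)
qed

definition st :: "bool list \<Rightarrow> nat \<Rightarrow> bool option list" where
  "st c i = (map Some c)[i := None]"

lemma st_len[simp]: "length (st c i) = length c" by (simp add: st_def)

lemma st_nth: "k < length c \<Longrightarrow> st c i ! k = (if k = i then None else Some (c ! k))"
  by (simp add: st_def nth_list_update)

lemma fill_st: "i < length c \<Longrightarrow> fill (st c i) b = c[i := b]"
  by (rule nth_equalityI) (auto simp: fill_def st_nth nth_list_update)

lemma flip_flip: "k < length c \<Longrightarrow> flip (flip c k) k = c"
  by (simp add: flip_def)

lemma st_words:
  assumes "odd (weight c)" "i < length c"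
  shows "e_word (st c i) = flip c i \<and> o_word (st c i) = c"
proof (cases "c ! i")
  case True
  then have "c[i:=True] = c" by (metis list_update_id)
  with True have a: "fill (st c i) False = flip c i" "fill (st c i) True = c"
    using assms by (auto simp: fill_st flip_def)
  have "even (weight (flip c i))" using flip_par[OF assms(2)] assms(1) by simp
  then show ?thesis using a by (simp add: e_word_def o_word_def)
next
  case False
  then have "c[i:=False] = c" by (metis list_update_id)
  with False have a: "fill (st c i) False = c" "fill (st c i) True = flip c i"
    using assms by (auto simp: fill_st flip_def)
  then show ?thesis using assms by (simp add: e_word_def o_word_def)
qed

lemma st_X: "i < length c \<Longrightarrow> st c i \<in> X (length c)"
proof -
  assume i: "i < length c"
  have "{k. k < length c \<and> st c i ! k = None} = {i}" using i by (auto simp: st_nth split: if_splits)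
  then show ?thesis by (simp add: X_def)
qed

lemma st_dist:
  assumes "length c' = length c" "i < length c" "j < length c"
  shows "hdist c c' \<le> Suc (hdist (st c i) (st c' j))"
proof -
  let ?D = "{k. k < length c \<and> c ! k \<noteq> c' ! k}"
  let ?E = "{k. k < length (st c i) \<and> st c i ! k \<noteq> st c' j ! k}"
  have "?D \<subseteq> insert i ?E" using assms by (auto simp: st_nth split: if_splits)
  then have "card ?D \<le> card (insert i ?E)" by (rule card_mono[rotated]) simp
  also have "\<dots> \<le> Suc (card ?E)" by (simp add: card_insert_if)
  finally show ?thesis by (simp add: hdist_def)
qed

theorem lemma1:
  fixes m n :: nat and C0 C1 :: "bool list set"
  assumes "m > 0" and "n = 2 ^ m"
    and "C0 \<subseteq> F n" and "card C0 = 2 ^ (n - 1) div n" and "min_dist C0 4"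
    and "\<forall>c\<in>C0. even (weight c)"
    and "C1 \<subseteq> F n" and "card C1 = 2 ^ (n - 1) div n" and "min_dist C1 4"
    and "\<forall>c\<in>C1. odd (weight c)"
  shows "\<exists>C. C \<subseteq> X n \<and> card C = 2 ^ (n - 1) div n
           \<and> (\<forall>x\<in>C. \<forall>y\<in>C. x \<noteq> y \<longrightarrow> 3 \<le> hdist x y)
           \<and> e_word ` C = C0 \<and> o_word ` C = C1"
proof -
  note A = assms
  have n0: "0 < n" using A(2) by simp
  have mle: "m \<le> n - 1" using A(2) less_exp[of m] by linarith
  have "2 ^ (n-1) = n * 2 ^ (n - 1 - m)" using A(2) mle
    by (metis le_add_diff_inverse power_add)
  then have dv: "2 ^ (n-1) div n * n = (2::nat) ^ (n-1)" using n0 by simp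
  have cn0: "card C0 * n = 2 ^ (n-1)" using A(4) dv by simp
  have cn1: "card C1 * n = 2 ^ (n-1)" using A(8) dv by simp
  have d0: "\<forall>u\<in>C0. \<forall>v\<in>C0. u \<noteq> v \<longrightarrow> 4 \<le> hdist u v" using A(5) by (simp add: min_dist_def)
  have d1: "\<forall>u\<in>C1. \<forall>v\<in>C1. u \<noteq> v \<longrightarrow> 4 \<le> hdist u v" using A(9) by (simp add: min_dist_def)
  have d0': "\<forall>u\<in>C0. \<forall>v\<in>C0. u \<noteq> v \<longrightarrow> 3 \<le> hdist u v" using d0 by force
  have d1': "\<forall>u\<in>C1. \<forall>v\<in>C1. u \<noteq> v \<longrightarrow> 3 \<le> hdist u v" using d1 by force
  have len0: "\<And>c. c \<in> C0 \<Longrightarrow> length c = n" using A(3) by (auto simp: F_def)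
  have len1: "\<And>c. c \<in> C1 \<Longrightarrow> length c = n" using A(7) by (auto simp: F_def)
  have par0: "\<forall>c\<in>C0. odd (weight c) = False" using A(6) by simp
  have par1: "\<forall>c\<in>C1. odd (weight c) = True" using A(10) by simp
  define C where "C = {st c i | c i. c \<in> C1 \<and> i < n \<and> flip c i \<in> C0}"
  have CX: "C \<subseteq> X n" using len1 st_X unfolding C_def by fastforce
  have eC: "e_word ` C \<subseteq> C0" unfolding C_def using st_words len1 A(10) by fastforce
  have oC: "o_word ` C \<subseteq> C1" unfolding C_def using st_words len1 A(10) by fastforce
  have eC2: "C0 \<subseteq> e_word ` C"
  proof
    fix c0 assume c0: "c0 \<in> C0"
    obtain c1 i where c1: "c1 \<in> C1" "i < n" "c0 = flip c1 i"
      using cover[OF A(7) par1 d1' cn1 n0, of c0] c0 len0 A(6) by auto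
    then have "st c1 i \<in> C" using c0 unfolding C_def by auto
    moreover have "e_word (st c1 i) = c0" using st_words[of c1 i] c1 len1 A(10) by auto
    ultimately show "c0 \<in> e_word ` C" by force
  qed
  have oC2: "C1 \<subseteq> o_word ` C"
  proof
    fix c1 assume c1: "c1 \<in> C1"
    obtain c0 i where c0: "c0 \<in> C0" "i < n" "c1 = flip c0 i"
      using cover[OF A(3) par0 d0' cn0 n0, of c1] c1 len1 A(10) by auto
    then have "flip c1 i = c0" using flip_flip len0 by auto
    then have "st c1 i \<in> C" using c0 c1 unfolding C_def by blast
    moreover have "o_word (st c1 i) = c1" using st_words[of c1 i] c1 A(10) len1[OF c1] c0(2) by simp
    ultimately show "c1 \<in> o_word ` C" by force
  qed
  have key: "c = c' \<and> i = j" if "c \<in> C1" "c' \<in> C1" "i < n" "j < n" "flip c i = flip c' j" for c c' i j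
  proof -
    have "c = c'"
    proof (rule ccontr)
      assume "c \<noteq> c'"
      then have "4 \<le> hdist c c'" using d1 that by auto
      moreover have "hdist c c' \<le> 2" using flip_flip_le2[of c c' i j] that len1 by auto
      ultimately show False by simp
    qed
    then show ?thesis using flip_inj[of i c j] that len1 by auto
  qed
  have inj: "inj_on e_word C"
  proof (rule inj_onI)
    fix x y assume "x \<in> C" "y \<in> C" and e: "e_word x = e_word y"
    then obtain c i c' j where x: "x = st c i" "c \<in> C1" "i < n" "flip c i \<in> C0"
      and y: "y = st c' j" "c' \<in> C1" "j < n" "flip c' j \<in> C0" unfolding C_def by blast
    have "flip c i = flip c' j" using e x y st_words[of c i] st_words[of c' j] len1 A(10) by auto
    then show "x = y" using key x y by blast
  qed
  have cardC: "card C = card C0" using card_image[OF inj] eC eC2 by auto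
  have dist: "\<forall>x\<in>C. \<forall>y\<in>C. x \<noteq> y \<longrightarrow> 3 \<le> hdist x y"
  proof (intro ballI impI)
    fix x y assume "x \<in> C" "y \<in> C" and ne: "x \<noteq> y"
    then obtain c i c' j where x: "x = st c i" "c \<in> C1" "i < n" "flip c i \<in> C0"
      and y: "y = st c' j" "c' \<in> C1" "j < n" "flip c' j \<in> C0" unfolding C_def by blast
    have cc: "c \<noteq> c'"
    proof
      assume cc: "c = c'"
      then have ij: "i \<noteq> j" using ne x y by auto
      then have "flip c i \<noteq> flip c j" using flip_inj[of i c j] x y len1 cc by auto
      then have "4 \<le> hdist (flip c i) (flip c j)" using d0 x y cc by auto
      then show False using flip_same_le2[of c i j] by simp
    qed
    then have "4 \<le> hdist c c'" using d1 x y by auto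
    moreover have "hdist c c' \<le> Suc (hdist x y)" using st_dist[of c' c i j] x y len1 by auto
    ultimately show "3 \<le> hdist x y" by simp
  qed
  show ?thesis
    apply (rule exI[of _ C])
    using CX cardC A(4) dist eC eC2 oC oC2 by auto
qed

end
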